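(* Let $M\in\mathbb N$, $a_1,\dots,a_M>0$, and functions $\phi_{i,j}$ ($i=1,2$, $j=1,\dots,M$) with $\phi_{i,j}\in\mathcal V_{a_j}$. Let $a:=\sum_{j=1}^Ma_j$ and $b>a$, and set $b_j:=b-\sum_{k\ne j}a_k$. Then $$\theta_b\Big(\prod_{j=1}^M\phi_{1,j},\ \prod_{j=1}^M\phi_{2,j}\Big)\le\sum_{j=1}^M\theta_{b_j}(\phi_{1,j},\phi_{2,j}).$$
   Context: $\mathbb T=\mathbb R/\mathbb Z$. $\mathcal V_a:=\{\psi\in C^2(\mathbb T,(0,\infty)):|\frac d{dx}\log\psi|<a\}$ (so $\mathcal V_a\subset\mathcal V_{a'}$ for $a\le a'$). For $\psi_1,\psi_2\in\mathcal V_a$, $\beta_a(\psi_1,\psi_2):=\inf\{t>0:t\psi_1-\psi_2\in\mathcal V_a\}$ and $\theta_a(\psi_1,\psi_2):=\log\beta_a(\psi_1,\psi_2)+\log\beta_a(\psi_2,\psi_1)$. *)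

theory Defs
  imports "HOL-Analysis.Analysis"
begin

text \<open>Functions on T = R/Z are represented as 1-periodic functions on the reals.
  C^2: twice differentiable everywhere with continuous second derivative.\<close>

definition C2_periodic :: "(real \<Rightarrow> real) \<Rightarrow> bool" where
  "C2_periodic f \<longleftrightarrow> (\<forall>x. f (x + 1) = f x) \<and> (\<forall>x. f differentiable at x)
     \<and> (\<forall>x. deriv f differentiable at x) \<and> continuous_on UNIV (deriv (deriv f))"

definition Vcone :: "real \<Rightarrow> (real \<Rightarrow> real) set" where
  "Vcone a = {\<psi>. C2_periodic \<psi> \<and> (\<forall>x. \<psi> x > 0) \<and> (\<forall>x. \<bar>deriv (\<lambda>y. ln (\<psi> y)) x\<bar> < a)}"

definition beta_cone :: "real \<Rightarrow> (real \<Rightarrow> real) \<Rightarrow> (real \<Rightarrow> real) \<Rightarrow> real" where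
  "beta_cone a \<psi>1 \<psi>2 = Inf {t. t > 0 \<and> (\<lambda>x. t * \<psi>1 x - \<psi>2 x) \<in> Vcone a}"

definition theta_cone :: "real \<Rightarrow> (real \<Rightarrow> real) \<Rightarrow> (real \<Rightarrow> real) \<Rightarrow> real" where
  "theta_cone a \<psi>1 \<psi>2 = ln (beta_cone a \<psi>1 \<psi>2) + ln (beta_cone a \<psi>2 \<psi>1)"

end

theory Submission imports Defs begin

lemma C2_iff: "C2_periodic f \<longleftrightarrow> (\<forall>x. f (x+1) = f x) \<and> (\<exists>f' f''. (\<forall>x. (f has_real_derivative f' x) (at x)) \<and> (\<forall>x. (f' has_real_derivative f'' x) (at x)) \<and> continuous_on UNIV f'')"
proof
  assume h: "C2_periodic f"
  show "(\<forall>x. f (x+1) = f x) \<and> (\<exists>f' f''. (\<forall>x. (f has_real_derivative f' x) (at x)) \<and> (\<forall>x. (f' has_real_derivative f'' x) (at x)) \<and> continuous_on UNIV f'')"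
    using h unfolding C2_periodic_def
    by (metis DERIV_deriv_iff_real_differentiable)
next
  assume h: "(\<forall>x. f (x+1) = f x) \<and> (\<exists>f' f''. (\<forall>x. (f has_real_derivative f' x) (at x)) \<and> (\<forall>x. (f' has_real_derivative f'' x) (at x)) \<and> continuous_on UNIV f'')"
  then obtain f' f'' where p: "\<forall>x. f (x+1) = f x" and d1: "\<forall>x. (f has_real_derivative f' x) (at x)"
    and d2: "\<forall>x. (f' has_real_derivative f'' x) (at x)" and c: "continuous_on UNIV f''" by blast
  have e1: "deriv f = f'" using d1 DERIV_imp_deriv by blast
  have e2: "deriv f' = f''" using d2 DERIV_imp_deriv by blast
  show "C2_periodic f" unfolding C2_periodic_def e1 e2
    using p d1 d2 c real_differentiable_def by blast
qed

lemma C2_deriv: "C2_periodic f \<Longrightarrow> (f has_real_derivative deriv f x) (at x)"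
  unfolding C2_periodic_def by (metis DERIV_deriv_iff_real_differentiable)

lemma C2_cont: "C2_periodic f \<Longrightarrow> continuous_on UNIV f"
  by (meson C2_deriv DERIV_isCont continuous_at_imp_continuous_on)

lemma C2_mult:
  assumes "C2_periodic f" "C2_periodic g" shows "C2_periodic (\<lambda>x. f x * g x)"
proof -
  obtain f' f'' where p: "\<forall>x. f (x+1) = f x" and d1: "\<forall>x. (f has_real_derivative f' x) (at x)"
    and d2: "\<forall>x. (f' has_real_derivative f'' x) (at x)" and c: "continuous_on UNIV f''"
    using assms(1) unfolding C2_iff by blast
  obtain g' g'' where q: "\<forall>x. g (x+1) = g x" and e1: "\<forall>x. (g has_real_derivative g' x) (at x)"
    and e2: "\<forall>x. (g' has_real_derivative g'' x) (at x)" and c2: "continuous_on UNIV g''"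
    using assms(2) unfolding C2_iff by blast
  have cf: "continuous_on UNIV f" "continuous_on UNIV f'" "continuous_on UNIV g" "continuous_on UNIV g'"
    using d1 d2 e1 e2 by (meson DERIV_isCont continuous_at_imp_continuous_on)+
  show ?thesis unfolding C2_iff
  proof (intro conjI exI allI)
    show "f (x + 1) * g (x + 1) = f x * g x" for x using p q by simp
    show "((\<lambda>x. f x * g x) has_real_derivative f' x * g x + f x * g' x) (at x)" for x
      using d1 e1 by (auto intro!: derivative_eq_intros)
    show "((\<lambda>x. f' x * g x + f x * g' x) has_real_derivative
        (f'' x * g x + f' x * g' x) + (f' x * g' x + f x * g'' x)) (at x)" for x
      using d1 e1 d2 e2 by (auto intro!: derivative_eq_intros)
    show "continuous_on UNIV (\<lambda>x. (f'' x * g x + f' x * g' x) + (f' x * g' x + f x * g'' x))"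
      using cf c c2 by (intro continuous_intros)
  qed
qed

lemma C2_const: "C2_periodic (\<lambda>x. c)"
  unfolding C2_iff by (intro conjI exI allI) (auto intro!: derivative_eq_intros continuous_intros)

lemma C2_add:
  assumes "C2_periodic f" "C2_periodic g" shows "C2_periodic (\<lambda>x. f x + g x)"
proof -
  obtain f' f'' where p: "\<forall>x. f (x+1) = f x" and d1: "\<forall>x. (f has_real_derivative f' x) (at x)"
    and d2: "\<forall>x. (f' has_real_derivative f'' x) (at x)" and c: "continuous_on UNIV f''"
    using assms(1) unfolding C2_iff by blast
  obtain g' g'' where q: "\<forall>x. g (x+1) = g x" and e1: "\<forall>x. (g has_real_derivative g' x) (at x)"
    and e2: "\<forall>x. (g' has_real_derivative g'' x) (at x)" and c2: "continuous_on UNIV g''"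
    using assms(2) unfolding C2_iff by blast
  show ?thesis unfolding C2_iff
  proof (intro conjI exI allI)
    show "f (x + 1) + g (x + 1) = f x + g x" for x using p q by simp
    show "((\<lambda>x. f x + g x) has_real_derivative f' x + g' x) (at x)" for x
      using d1 e1 by (auto intro!: derivative_eq_intros)
    show "((\<lambda>x. f' x + g' x) has_real_derivative f'' x + g'' x) (at x)" for x
      using d2 e2 by (auto intro!: derivative_eq_intros)
    show "continuous_on UNIV (\<lambda>x. f'' x + g'' x)"
      using c c2 by (intro continuous_intros)
  qed
qed

lemma C2_scale: "C2_periodic f \<Longrightarrow> C2_periodic (\<lambda>x. c * f x)"
  using C2_mult[OF C2_const] by blast

lemma C2_diff: "C2_periodic f \<Longrightarrow> C2_periodic g \<Longrightarrow> C2_periodic (\<lambda>x. f x - g x)"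
  using C2_add[of f "\<lambda>x. (-1) * g x"] C2_scale[of g "-1"] by simp

lemma C2_prod: "finite I \<Longrightarrow> (\<And>j. j \<in> I \<Longrightarrow> C2_periodic (f j)) \<Longrightarrow> C2_periodic (\<lambda>x. \<Prod>j\<in>I. f j x)"
proof (induction I rule: finite_induct)
  case empty then show ?case by (simp add: C2_const)
next
  case (insert i I) then show ?case using C2_mult[of "f i" "\<lambda>x. \<Prod>j\<in>I. f j x"] by simp
qed

lemma Vcone_iff: "\<psi> \<in> Vcone a \<longleftrightarrow> C2_periodic \<psi> \<and> (\<forall>x. \<psi> x > 0) \<and> (\<forall>x. \<bar>deriv \<psi> x\<bar> < a * \<psi> x)"
proof -
  have key: "\<bar>deriv (\<lambda>y. ln (\<psi> y)) x\<bar> < a \<longleftrightarrow> \<bar>deriv \<psi> x\<bar> < a * \<psi> x"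
    if "C2_periodic \<psi>" "\<psi> x > 0" for x
  proof -
    have "((\<lambda>y. ln (\<psi> y)) has_real_derivative deriv \<psi> x / \<psi> x) (at x)"
      using C2_deriv[OF that(1), of x] that(2) by (auto intro!: derivative_eq_intros)
    then have "deriv (\<lambda>y. ln (\<psi> y)) x = deriv \<psi> x / \<psi> x" by (rule DERIV_imp_deriv)
    then show ?thesis using that(2) by (simp add: abs_divide divide_less_eq)
  qed
  show ?thesis unfolding Vcone_def using key by auto
qed

lemma Vcone_mult:
  assumes f: "f \<in> Vcone a" and g: "g \<in> Vcone c" shows "(\<lambda>x. f x * g x) \<in> Vcone (a + c)"
proof -
  have cf: "C2_periodic f" "\<forall>x. f x > 0" "\<forall>x. \<bar>deriv f x\<bar> < a * f x" using f Vcone_iff by auto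
  have cg: "C2_periodic g" "\<forall>x. g x > 0" "\<forall>x. \<bar>deriv g x\<bar> < c * g x" using g Vcone_iff by auto
  have d: "deriv (\<lambda>x. f x * g x) x = deriv f x * g x + f x * deriv g x" for x
    by (rule DERIV_imp_deriv) (use C2_deriv[OF cf(1)] C2_deriv[OF cg(1)] in \<open>auto intro!: derivative_eq_intros\<close>)
  have "\<bar>deriv f x * g x + f x * deriv g x\<bar> < (a + c) * (f x * g x)" for x
  proof -
    have "\<bar>deriv f x * g x + f x * deriv g x\<bar> \<le> \<bar>deriv f x\<bar> * g x + f x * \<bar>deriv g x\<bar>"
      using cf(2) cg(2) abs_triangle_ineq[of "deriv f x * g x" "f x * deriv g x"]
      by (simp add: abs_mult abs_of_pos[OF spec[OF cf(2)]] abs_of_pos[OF spec[OF cg(2)]])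
    also have "\<dots> < (a * f x) * g x + f x * (c * g x)"
      using cf cg by (intro add_strict_mono mult_strict_right_mono mult_strict_left_mono) auto
    finally show ?thesis by (simp add: algebra_simps)
  qed
  then show ?thesis unfolding Vcone_iff d using C2_mult[OF cf(1) cg(1)] cf(2) cg(2) by auto
qed

lemma Vcone_add:
  assumes f: "f \<in> Vcone a" and g: "g \<in> Vcone a" shows "(\<lambda>x. f x + g x) \<in> Vcone a"
proof -
  have cf: "C2_periodic f" "\<forall>x. f x > 0" "\<forall>x. \<bar>deriv f x\<bar> < a * f x" using f Vcone_iff by auto
  have cg: "C2_periodic g" "\<forall>x. g x > 0" "\<forall>x. \<bar>deriv g x\<bar> < a * g x" using g Vcone_iff by auto
  have d: "deriv (\<lambda>x. f x + g x) x = deriv f x + deriv g x" for x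
    by (rule DERIV_imp_deriv) (use C2_deriv[OF cf(1)] C2_deriv[OF cg(1)] in \<open>auto intro!: derivative_eq_intros\<close>)
  have "\<bar>deriv f x + deriv g x\<bar> < a * (f x + g x)" for x
    using cf(3) cg(3) by (smt (verit) distrib_left)
  then show ?thesis unfolding Vcone_iff d using C2_add[OF cf(1) cg(1)] cf(2) cg(2) by (auto intro: add_pos_pos)
qed

lemma Vcone_scale:
  assumes f: "f \<in> Vcone a" and t: "t > 0" shows "(\<lambda>x. t * f x) \<in> Vcone a"
proof -
  have cf: "C2_periodic f" "\<forall>x. f x > 0" "\<forall>x. \<bar>deriv f x\<bar> < a * f x" using f Vcone_iff by auto
  have d: "deriv (\<lambda>x. t * f x) x = t * deriv f x" for x
    by (rule DERIV_imp_deriv) (use C2_deriv[OF cf(1)] in \<open>auto intro!: derivative_eq_intros\<close>)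
  have "\<bar>t * deriv f x\<bar> < a * (t * f x)" for x
  proof -
    have "\<bar>t * deriv f x\<bar> = t * \<bar>deriv f x\<bar>" using t by (simp add: abs_mult)
    also have "\<dots> < t * (a * f x)" using cf(3) t by simp
    finally show ?thesis by (simp add: algebra_simps)
  qed
  then show ?thesis unfolding Vcone_iff d using C2_scale[OF cf(1)] cf(2) t by auto
qed

lemma Vcone_prod:
  "finite I \<Longrightarrow> I \<noteq> {} \<Longrightarrow> (\<And>j. j \<in> I \<Longrightarrow> \<phi> j \<in> Vcone (a j)) \<Longrightarrow> (\<lambda>x. \<Prod>j\<in>I. \<phi> j x) \<in> Vcone (sum a I)"
proof (induction I rule: finite_ne_induct)
  case (singleton x) then show ?case by simp
next
  case (insert i I) then show ?case
    using Vcone_mult[of "\<phi> i" "a i" "\<lambda>x. \<Prod>j\<in>I. \<phi> j x" "sum a I"] by simp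
qed

lemma key:
  assumes "finite I" "I \<noteq> {}"
  shows "(\<And>j. j \<in> I \<Longrightarrow> t j > 0 \<and> \<phi>1 j \<in> Vcone (a j) \<and> \<phi>2 j \<in> Vcone (a j)
            \<and> (\<lambda>x. t j * \<phi>1 j x - \<phi>2 j x) \<in> Vcone (a j + d))
    \<Longrightarrow> (\<lambda>x. (\<Prod>j\<in>I. t j * \<phi>1 j x) - (\<Prod>j\<in>I. \<phi>2 j x)) \<in> Vcone (sum a I + d)"
  using assms
proof (induction I rule: finite_ne_induct)
  case (singleton x) then show ?case by (simp add: add.commute)
next
  case (insert i I)
  let ?A = "\<lambda>x. \<Prod>j\<in>I. t j * \<phi>1 j x" and ?B = "\<lambda>x. \<Prod>j\<in>I. \<phi>2 j x"
  have AB: "(\<lambda>x. ?A x - ?B x) \<in> Vcone (sum a I + d)" using insert by auto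
  have B: "?B \<in> Vcone (sum a I)" using insert Vcone_prod[of I \<phi>2 a] by auto
  have ti: "(\<lambda>x. t i * \<phi>1 i x) \<in> Vcone (a i)" using insert.prems Vcone_scale by auto
  have hi: "(\<lambda>x. t i * \<phi>1 i x - \<phi>2 i x) \<in> Vcone (a i + d)" using insert.prems by auto
  have 1: "(\<lambda>x. (?A x - ?B x) * (t i * \<phi>1 i x)) \<in> Vcone (sum a (insert i I) + d)"
    using Vcone_mult[OF AB ti] insert.hyps by (simp add: algebra_simps)
  have 2: "(\<lambda>x. ?B x * (t i * \<phi>1 i x - \<phi>2 i x)) \<in> Vcone (sum a (insert i I) + d)"
    using Vcone_mult[OF B hi] insert.hyps by (simp add: algebra_simps)
  have eq: "(\<lambda>x. (\<Prod>j\<in>insert i I. t j * \<phi>1 j x) - (\<Prod>j\<in>insert i I. \<phi>2 j x))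
     = (\<lambda>x. (?A x - ?B x) * (t i * \<phi>1 i x) + ?B x * (t i * \<phi>1 i x - \<phi>2 i x))"
    using insert.hyps by (auto simp: algebra_simps)
  show ?case unfolding eq by (rule Vcone_add[OF 1 2])
qed

lemma periodic_nat: "C2_periodic f \<Longrightarrow> f (x + real m) = f x"
proof (induction m arbitrary: x)
  case 0 then show ?case by simp
next
  case (Suc m)
  have "f (x + real (Suc m)) = f ((x + real m) + 1)" by (simp add: algebra_simps)
  also have "\<dots> = f (x + real m)" using Suc.prems unfolding C2_periodic_def by blast
  finally show ?case using Suc by simp
qed

lemma periodic_int: assumes "C2_periodic f" shows "f (x + real_of_int n) = f x"
proof (cases "n \<ge> 0")
  case True
  then have e: "real_of_int n = real (nat n)" by simp
  show ?thesis unfolding e by (rule periodic_nat[OF assms])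
next
  case False
  then have e: "real_of_int n = - real (nat (-n))" by simp
  have "f x = f ((x + real_of_int n) + real (nat (-n)))" unfolding e by simp
  also have "\<dots> = f (x + real_of_int n)" by (rule periodic_nat[OF assms])
  finally show ?thesis by simp
qed

lemma ratio_bound:
  assumes f: "f \<in> Vcone a" and g: "g \<in> Vcone c" shows "\<exists>K>0. \<forall>x. f x \<le> K * g x"
proof -
  have cf: "C2_periodic f" "\<forall>x. f x > 0" using f Vcone_iff by auto
  have cg: "C2_periodic g" "\<forall>x. g x > 0" using g Vcone_iff by auto
  let ?h = "\<lambda>x. f x / g x"
  have ch: "continuous_on {0..1} ?h"
  proof (rule continuous_on_divide)
    show "continuous_on {0..1} f" using continuous_on_subset[OF C2_cont[OF cf(1)]] by blast
    show "continuous_on {0..1} g" using continuous_on_subset[OF C2_cont[OF cg(1)]] by blast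
    show "\<forall>x\<in>{0..1}. g x \<noteq> 0" using cg(2) by (metis less_irrefl)
  qed
  obtain z where z: "z \<in> {0..1}" "\<forall>y\<in>{0..1}. ?h y \<le> ?h z"
    using continuous_attains_sup[OF compact_Icc _ ch] by auto
  have pos: "?h z > 0" using cf cg by simp
  have "f x \<le> ?h z * g x" for x
  proof -
    have "?h x = ?h (x + real_of_int (- \<lfloor>x\<rfloor>))"
      using periodic_int[OF cf(1), of x "- \<lfloor>x\<rfloor>"] periodic_int[OF cg(1), of x "- \<lfloor>x\<rfloor>"] by (simp only:)
    also have "\<dots> \<le> ?h z"
    proof -
      have "x + real_of_int (- \<lfloor>x\<rfloor>) \<in> {0..1}"
      proof -
        have "of_int \<lfloor>x\<rfloor> \<le> x" "x < real_of_int \<lfloor>x\<rfloor> + 1"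
          by (rule of_int_floor_le, rule real_of_int_floor_add_one_gt)
        then show ?thesis by (simp; linarith)
      qed
      then show ?thesis using z(2) by blast
    qed
    finally show ?thesis using cg(2) by (simp add: divide_le_eq)
  qed
  then show ?thesis using pos by blast
qed

lemma exists_t:
  assumes f: "\<phi>1 \<in> Vcone a" and g: "\<phi>2 \<in> Vcone a" and d: "d > 0"
  shows "\<exists>t>0. (\<lambda>x. t * \<phi>1 x - \<phi>2 x) \<in> Vcone (a + d)"
proof -
  have cf: "C2_periodic \<phi>1" "\<forall>x. \<phi>1 x > 0" "\<forall>x. \<bar>deriv \<phi>1 x\<bar> < a * \<phi>1 x" using f Vcone_iff by auto
  have cg: "C2_periodic \<phi>2" "\<forall>x. \<phi>2 x > 0" "\<forall>x. \<bar>deriv \<phi>2 x\<bar> < a * \<phi>2 x" using g Vcone_iff by auto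
  have a: "a > 0"
  proof -
    have "0 < a * \<phi>1 0" using spec[OF cf(3), of 0] abs_ge_zero[of "deriv \<phi>1 0"] by linarith
    then show ?thesis using spec[OF cf(2), of 0] by (simp add: zero_less_mult_iff)
  qed
  obtain K where K: "K > 0" "\<forall>x. \<phi>2 x \<le> K * \<phi>1 x" using ratio_bound[OF g f] by blast
  define t where "t = K * (2*a+d) / d + 1"
  have t: "t > 0"
  proof -
    have "K * (2*a+d) / d > 0" using K a d by simp
    then show ?thesis unfolding t_def by linarith
  qed
  have td: "t * d = K * (2*a+d) + d" using d by (simp add: t_def field_simps)
  have dv: "deriv (\<lambda>x. t * \<phi>1 x - \<phi>2 x) x = t * deriv \<phi>1 x - deriv \<phi>2 x" for x
    by (rule DERIV_imp_deriv) (use C2_deriv[OF cf(1)] C2_deriv[OF cg(1)] in \<open>auto intro!: derivative_eq_intros\<close>)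
  have pt: "t * \<phi>1 x - \<phi>2 x > 0 \<and> \<bar>t * deriv \<phi>1 x - deriv \<phi>2 x\<bar> < (a + d) * (t * \<phi>1 x - \<phi>2 x)" for x
  proof -
    define u where "u = \<phi>1 x"
    define v where "v = \<phi>2 x"
    define p where "p = deriv \<phi>1 x"
    define q where "q = deriv \<phi>2 x"
    have u: "u > 0" and v: "v > 0" and p: "\<bar>p\<bar> < a * u" and q: "\<bar>q\<bar> < a * v" and vK: "v \<le> K * u"
      using cf cg K unfolding u_def v_def p_def q_def by auto
    have 1: "t * \<bar>p\<bar> \<le> t * (a * u)" using p t by simp
    have 2: "(2*a+d) * v \<le> (2*a+d) * (K * u)" using vK a d by simp
    have 3: "t * d * u = K * (2*a+d) * u + d * u" using td by (simp add: algebra_simps)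
    have 4: "\<bar>t * p - q\<bar> \<le> t * \<bar>p\<bar> + \<bar>q\<bar>" using abs_triangle_ineq4[of "t*p" q] t by (simp add: abs_mult)
    have 5: "d * u > 0" using d u by simp
    have "t * u - v > 0"
    proof -
      have e1: "(2*a+d) * (K * u) = K * (2*a+d) * u" by simp
      have e2: "(2 * a + d) * v = 2 * a * v + d * v" by (simp add: algebra_simps)
      have e3: "2 * a * v \<ge> 0" using a v by simp
      have "t * d * u > d * v" using 2 3 5 e1 e2 e3 by linarith
      then have "d * (t * u) > d * v" by (simp add: algebra_simps)
      then show ?thesis using d by simp
    qed
    moreover have "\<bar>t * p - q\<bar> < (a + d) * (t * u - v)"
    proof -
      have E: "(a + d) * (t * u - v) = a * (t * u) + t * d * u - a * v - d * v" by (simp add: algebra_simps)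
      have h1: "t * \<bar>p\<bar> \<le> a * (t * u)" using 1 by (simp add: algebra_simps)
      have A: "\<bar>t * p - q\<bar> < a * (t * u) + a * v" using h1 4 q by linarith
      have e1: "(2*a+d) * (K * u) = K * (2*a+d) * u" by simp
      have e2: "(2 * a + d) * v = 2 * a * v + d * v" by (simp add: algebra_simps)
      have B: "2 * a * v + d * v \<le> t * d * u" using 2 3 5 e1 e2 by linarith
      show ?thesis using A B E by linarith
    qed
    ultimately show ?thesis unfolding u_def v_def p_def q_def by simp
  qed
  have "(\<lambda>x. t * \<phi>1 x - \<phi>2 x) \<in> Vcone (a + d)"
    unfolding Vcone_iff dv using pt C2_diff[OF C2_scale[OF cf(1)] cg(1)] by auto
  then show ?thesis using t by blast
qed


lemma inf_pos:
  fixes S :: "real set"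
  assumes "\<And>t. t \<in> S \<Longrightarrow> t * p - q > 0" "p > 0" "q > 0" "S \<noteq> {}"
  shows "Inf S > 0"
proof -
  have "q / p \<le> Inf S"
  proof (rule cInf_greatest[OF assms(4)])
    fix t assume "t \<in> S"
    then have "t * p > q" using assms(1) by force
    then show "q / p \<le> t" using assms(2) by (simp add: divide_le_eq)
  qed
  moreover have "q / p > 0" using assms by simp
  ultimately show ?thesis by linarith
qed

lemma ln_beta_prod:
  fixes I :: "nat set"
  assumes I: "finite I" "I \<noteq> {}" and d: "d > 0"
    and phi1: "\<And>j. j \<in> I \<Longrightarrow> \<phi>1 j \<in> Vcone (a j)"
    and phi2: "\<And>j. j \<in> I \<Longrightarrow> \<phi>2 j \<in> Vcone (a j)"
  shows "ln (beta_cone (sum a I + d) (\<lambda>x. \<Prod>j\<in>I. \<phi>1 j x) (\<lambda>x. \<Prod>j\<in>I. \<phi>2 j x))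
     \<le> (\<Sum>j\<in>I. ln (beta_cone (a j + d) (\<phi>1 j) (\<phi>2 j)))"
proof -
  define S where "S j = {t. t > 0 \<and> (\<lambda>x. t * \<phi>1 j x - \<phi>2 j x) \<in> Vcone (a j + d)}" for j
  define \<beta> where "\<beta> j = Inf (S j)" for j
  define S0 where "S0 = {t. t > 0 \<and> (\<lambda>x. t * (\<Prod>j\<in>I. \<phi>1 j x) - (\<Prod>j\<in>I. \<phi>2 j x)) \<in> Vcone (sum a I + d)}"
  define \<beta>0 where "\<beta>0 = Inf S0"
  have bc: "beta_cone (sum a I + d) (\<lambda>x. \<Prod>j\<in>I. \<phi>1 j x) (\<lambda>x. \<Prod>j\<in>I. \<phi>2 j x) = \<beta>0"
    unfolding \<beta>0_def S0_def beta_cone_def by simp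
  have bcj: "beta_cone (a j + d) (\<phi>1 j) (\<phi>2 j) = \<beta> j" for j
    unfolding \<beta>_def S_def beta_cone_def by simp
  have pos1: "\<phi>1 j x > 0" if "j \<in> I" for j x using phi1[OF that] Vcone_iff by auto
  have pos2: "\<phi>2 j x > 0" if "j \<in> I" for j x using phi2[OF that] Vcone_iff by auto
  have Sne: "S j \<noteq> {}" if "j \<in> I" for j
    using exists_t[OF phi1[OF that] phi2[OF that] d] unfolding S_def by auto
  have Spos: "t * \<phi>1 j 0 - \<phi>2 j 0 > 0" if "j \<in> I" "t \<in> S j" for j t
    using that(2) unfolding S_def Vcone_iff by auto
  have bpos: "\<beta> j > 0" if "j \<in> I" for j
    unfolding \<beta>_def by (rule inf_pos[OF Spos[OF that] pos1[OF that] pos2[OF that] Sne[OF that]])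
  have bdd: "bdd_below (S j)" for j unfolding S_def by (rule bdd_belowI[of _ 0]) auto
  have bdd0: "bdd_below S0" unfolding S0_def by (rule bdd_belowI[of _ 0]) auto
  have inS0: "(\<Prod>j\<in>I. t j) \<in> S0" if t: "\<And>j. j \<in> I \<Longrightarrow> t j \<in> S j" for t
  proof -
    have "(\<lambda>x. (\<Prod>j\<in>I. t j * \<phi>1 j x) - (\<Prod>j\<in>I. \<phi>2 j x)) \<in> Vcone (sum a I + d)"
      by (rule key[OF I]) (use t phi1 phi2 in \<open>auto simp: S_def\<close>)
    moreover have "(\<Prod>j\<in>I. t j) > 0" using t by (auto simp: S_def intro: prod_pos)
    ultimately show ?thesis unfolding S0_def by (simp add: prod.distrib)
  qed
  have "\<forall>j\<in>I. \<exists>t. t \<in> S j" using Sne by blast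
  from bchoice[OF this] obtain t0 where "\<forall>j\<in>I. t0 j \<in> S j" by (elim exE)
  then have t0: "\<And>j. j \<in> I \<Longrightarrow> t0 j \<in> S j" by simp
  have S0ne: "S0 \<noteq> {}" using inS0[OF t0] by blast
  have b0pos: "\<beta>0 > 0" unfolding \<beta>0_def
  proof (rule inf_pos[OF _ _ _ S0ne])
    show "(\<Prod>j\<in>I. \<phi>1 j 0) > 0" using pos1 by (simp add: prod_pos)
    show "(\<Prod>j\<in>I. \<phi>2 j 0) > 0" using pos2 by (simp add: prod_pos)
    show "t * (\<Prod>j\<in>I. \<phi>1 j 0) - (\<Prod>j\<in>I. \<phi>2 j 0) > 0" if "t \<in> S0" for t
      using that unfolding S0_def Vcone_iff by auto
  qed
  have ev: "ln \<beta>0 \<le> (\<Sum>j\<in>I. ln (\<beta> j + e))" if e: "e > 0" for e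
  proof -
    have "\<forall>j\<in>I. \<exists>t. t \<in> S j \<and> t < \<beta> j + e"
    proof
      fix j assume j: "j \<in> I"
      have "Inf (S j) < Inf (S j) + e" using e by simp
      from cInf_lessD[OF Sne[OF j] this] show "\<exists>t. t \<in> S j \<and> t < \<beta> j + e"
        unfolding \<beta>_def by blast
    qed
    from bchoice[OF this] obtain t where "\<forall>j\<in>I. t j \<in> S j \<and> t j < \<beta> j + e" by (elim exE)
    then have t: "\<And>j. j \<in> I \<Longrightarrow> t j \<in> S j \<and> t j < \<beta> j + e" by simp
    have tpos: "t j > 0" if "j \<in> I" for j using t[OF that] unfolding S_def by auto
    have "\<beta>0 \<le> (\<Prod>j\<in>I. t j)" unfolding \<beta>0_def
      by (rule cInf_lower[OF inS0 bdd0]) (use t in blast)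
    then have "ln \<beta>0 \<le> ln (\<Prod>j\<in>I. t j)" using b0pos by simp
    also have "\<dots> = (\<Sum>j\<in>I. ln (t j))" by (rule ln_prod[OF I(1)]) (use tpos in force)
    also have "\<dots> \<le> (\<Sum>j\<in>I. ln (\<beta> j + e))"
      proof (rule sum_mono)
      fix j assume j: "j \<in> I"
      show "ln (t j) \<le> ln (\<beta> j + e)" using t[OF j] tpos[OF j] by simp
    qed
    finally show ?thesis .
  qed
  have lim: "((\<lambda>e. \<Sum>j\<in>I. ln (\<beta> j + e)) \<longlongrightarrow> (\<Sum>j\<in>I. ln (\<beta> j + 0))) (at_right 0)"
    using bpos by (intro tendsto_intros) (auto, metis less_irrefl)
  have "ln \<beta>0 \<le> (\<Sum>j\<in>I. ln (\<beta> j + 0))"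
  proof (rule tendsto_lowerbound[OF lim])
    show "\<forall>\<^sub>F e in at_right 0. ln \<beta>0 \<le> (\<Sum>j\<in>I. ln (\<beta> j + e))"
      by (rule eventually_at_rightI[of 0 1]) (auto intro: ev)
    show "\<not> trivial_limit (at_right (0::real))" by simp
  qed
  then show ?thesis unfolding bc bcj by simp
qed


lemma beta_one: assumes b: "b > 0" shows "beta_cone b (\<lambda>x. 1) (\<lambda>x. 1) = 1"
proof -
  have "{t. t > 0 \<and> (\<lambda>x. t * 1 - 1) \<in> Vcone b} = {1<..}"
  proof (intro set_eqI iffI)
    fix t assume "t \<in> {t. t > 0 \<and> (\<lambda>x. t * 1 - 1) \<in> Vcone b}"
    then show "t \<in> {1<..}" unfolding Vcone_iff by auto
  next
    fix t :: real assume t: "t \<in> {1<..}"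
    have d: "deriv (\<lambda>x. t * 1 - 1) x = 0" for x by (rule DERIV_imp_deriv) (rule DERIV_const)
    show "t \<in> {t. t > 0 \<and> (\<lambda>x. t * 1 - 1) \<in> Vcone b}"
      unfolding Vcone_iff d using t b C2_const[of "t * 1 - 1"] by auto
  qed
  then show ?thesis unfolding beta_cone_def by simp
qed

theorem propositionA5:
  fixes M :: nat and a :: "nat \<Rightarrow> real" and b :: real
    and \<phi>1 \<phi>2 :: "nat \<Rightarrow> real \<Rightarrow> real"
  assumes apos: "\<And>j. j \<in> {1..M} \<Longrightarrow> a j > 0"
    and phi1: "\<And>j. j \<in> {1..M} \<Longrightarrow> \<phi>1 j \<in> Vcone (a j)"
    and phi2: "\<And>j. j \<in> {1..M} \<Longrightarrow> \<phi>2 j \<in> Vcone (a j)"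
    and b: "b > (\<Sum>j=1..M. a j)"
  shows "theta_cone b (\<lambda>x. \<Prod>j=1..M. \<phi>1 j x) (\<lambda>x. \<Prod>j=1..M. \<phi>2 j x)
           \<le> (\<Sum>j=1..M. theta_cone (b - (\<Sum>k\<in>{1..M} - {j}. a k)) (\<phi>1 j) (\<phi>2 j))"
proof (cases "M = 0")
  case True
  then have b0: "b > 0" using b by simp
  show ?thesis using True beta_one[OF b0] unfolding theta_cone_def by simp
next
  case False
  define I where "I = {1..M}"
  define d where "d = b - sum a I"
  have I: "finite I" "I \<noteq> {}" using False unfolding I_def by auto
  have d: "d > 0" using b unfolding d_def I_def by simp
  have bb: "b = sum a I + d" unfolding d_def by simp
  have bj: "b - (\<Sum>k\<in>I - {j}. a k) = a j + d" if "j \<in> I" for j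
    using that I(1) unfolding d_def by (simp add: sum_diff1)
  have h1: "ln (beta_cone b (\<lambda>x. \<Prod>j\<in>I. \<phi>1 j x) (\<lambda>x. \<Prod>j\<in>I. \<phi>2 j x))
     \<le> (\<Sum>j\<in>I. ln (beta_cone (a j + d) (\<phi>1 j) (\<phi>2 j)))"
    unfolding bb by (rule ln_beta_prod[OF I d]) (use phi1 phi2 I_def in auto)
  have h2: "ln (beta_cone b (\<lambda>x. \<Prod>j\<in>I. \<phi>2 j x) (\<lambda>x. \<Prod>j\<in>I. \<phi>1 j x))
     \<le> (\<Sum>j\<in>I. ln (beta_cone (a j + d) (\<phi>2 j) (\<phi>1 j)))"
    unfolding bb by (rule ln_beta_prod[OF I d]) (use phi1 phi2 I_def in auto)
  have "(\<Sum>j=1..M. theta_cone (b - (\<Sum>k\<in>{1..M} - {j}. a k)) (\<phi>1 j) (\<phi>2 j))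
      = (\<Sum>j\<in>I. ln (beta_cone (a j + d) (\<phi>1 j) (\<phi>2 j)) + ln (beta_cone (a j + d) (\<phi>2 j) (\<phi>1 j)))"
    unfolding I_def[symmetric] theta_cone_def by (rule sum.cong) (simp_all add: bj)
  also have "\<dots> = (\<Sum>j\<in>I. ln (beta_cone (a j + d) (\<phi>1 j) (\<phi>2 j))) + (\<Sum>j\<in>I. ln (beta_cone (a j + d) (\<phi>2 j) (\<phi>1 j)))"
    by (rule sum.distrib)
  finally show ?thesis using h1 h2 unfolding theta_cone_def I_def by linarith
qed

end
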